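(* Let $F$ be a simple $\Bbbk\mathbf{FA}$-module. Then either $F\cong\Bbbk_{\mathbf 0}$, or there exists $n\in\mathbb N$ such that $F$ is a quotient of $\overline P^{\otimes n}$. Moreover, if $t\in\mathbb N$ and $F$ is a composition factor of $\overline P^{\otimes t}$, then $F(\mathbf{t+1})\neq0$.
   Context: Let $\Bbbk$ be a field. $\mathbf{FA}$ denotes the category of finite sets and all maps, and $\mathbf{FI}$, $\mathbf{FS}$, $\mathbf{FB}$ its wide subcategories of injections, surjections and bijections respectively; $\mathbf n=\{1,\dots,n\}$ for $n\in\mathbb N$ ($\mathbf 0=\emptyset$), and $\mathfrak S_n$ is the symmetric group. For a category $\mathcal C$, $\Bbbk\mathcal C(X,Y)$ is the $\Bbbk$-vector space with basis $\mathcal C(X,Y)$. A $\Bbbk\mathbf{FA}$-module is a functor from $\mathbf{FA}$ to $\Bbbk$-vector spaces (these form the abelian category $\mathcal F(\mathbf{FA})$); $\otimes$ denotes the pointwise tensor product over $\Bbbk$, and $\hom_{\Bbbk\mathbf{FA}}$ denotes natural transformations. $P^{\mathbf{FA}}_{\mathbf n}:=\Bbbk\mathbf{FA}(\mathbf n,-)$, so $P^{\mathbf{FA}}_{\mathbf n}(X)\cong\Bbbk[X]^{\otimes n}$ (where $\Bbbk[X]$ has basis $\{[x]:x\in X\}$), with the right $\mathfrak S_n$-action by precomposition, equivalently place permutation of tensor factors; write $P^{\mathbf{FA}}:=P^{\mathbf{FA}}_{\mathbf 1}$. Let $\overline{\Bbbk}$ be the functor with value $\Bbbk$ on non-empty sets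 (all maps acting by the identity) and $0$ on $\emptyset$, and $\Bbbk_{\mathbf 0}$ the functor with value $\Bbbk$ on $\emptyset$ and $0$ on non-empty sets. $\overline P$ is the kernel of the surjection $P^{\mathbf{FA}}\to\overline\Bbbk$, $[x]\mapsto 1$; thus $\overline P(X)=\{\sum_x a_x[x]:\sum_x a_x=0\}$. For $n\ge1$, $\overline P^{\otimes n}$ is the $n$-fold pointwise tensor power, a subfunctor of $P^{\mathbf{FA}}_{\mathbf n}$ stable under the place-permutation right action of $\mathfrak S_n$; by convention $\overline P^{\otimes 0}:=\overline\Bbbk$. *)

theory Defs
  imports Complex_Main "HOL-Library.FuncSet" "HOL-Library.Function_Algebras"
begin

text \<open>Skeleton of FA: objects are the naturals m (standing for the set {0..<m}),
  morphisms m -> m' are the extensional functions {0..<m} ->E {0..<m'}.\<close>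

definition FA_hom :: "nat \<Rightarrow> nat \<Rightarrow> (nat \<Rightarrow> nat) set" where
  "FA_hom m m' = {0..<m} \<rightarrow>\<^sub>E {0..<m'}"

text \<open>A kFA-module: ambient k-vector space (type 'v with scalar multiplication sc),
  a subspace V m for each object m, and linear maps act f m m' : V m -> V m'
  for f : m -> m', satisfying functoriality.\<close>

definition FA_module ::
  "('k::field \<Rightarrow> 'v::ab_group_add \<Rightarrow> 'v) \<Rightarrow> (nat \<Rightarrow> 'v set)
    \<Rightarrow> ((nat \<Rightarrow> nat) \<Rightarrow> nat \<Rightarrow> nat \<Rightarrow> 'v \<Rightarrow> 'v) \<Rightarrow> bool" where
  "FA_module sc V act \<longleftrightarrow>
     vector_space sc \<and>
     (\<forall>m. module.subspace sc (V m)) \<and>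
     (\<forall>m m' f. f \<in> FA_hom m m' \<longrightarrow>
        (\<forall>x\<in>V m. act f m m' x \<in> V m') \<and>
        (\<forall>x\<in>V m. \<forall>y\<in>V m. act f m m' (x + y) = act f m m' x + act f m m' y) \<and>
        (\<forall>c. \<forall>x\<in>V m. act f m m' (sc c x) = sc c (act f m m' x))) \<and>
     (\<forall>m. \<forall>x\<in>V m. act (restrict id {0..<m}) m m x = x) \<and>
     (\<forall>m m' m'' f g. f \<in> FA_hom m m' \<longrightarrow> g \<in> FA_hom m' m'' \<longrightarrow>
        (\<forall>x\<in>V m. act (compose {0..<m} g f) m m'' x = act g m' m'' (act f m m' x)))"

definition FA_submodule ::
  "('k::field \<Rightarrow> 'v::ab_group_add \<Rightarrow> 'v) \<Rightarrow> (nat \<Rightarrow> 'v set)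
    \<Rightarrow> ((nat \<Rightarrow> nat) \<Rightarrow> nat \<Rightarrow> nat \<Rightarrow> 'v \<Rightarrow> 'v) \<Rightarrow> (nat \<Rightarrow> 'v set) \<Rightarrow> bool" where
  "FA_submodule sc V act W \<longleftrightarrow>
     (\<forall>m. W m \<subseteq> V m \<and> module.subspace sc (W m)) \<and>
     (\<forall>m m' f. f \<in> FA_hom m m' \<longrightarrow> (\<forall>x\<in>W m. act f m m' x \<in> W m'))"

definition FA_simple ::
  "('k::field \<Rightarrow> 'v::ab_group_add \<Rightarrow> 'v) \<Rightarrow> (nat \<Rightarrow> 'v set)
    \<Rightarrow> ((nat \<Rightarrow> nat) \<Rightarrow> nat \<Rightarrow> nat \<Rightarrow> 'v \<Rightarrow> 'v) \<Rightarrow> bool" where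
  "FA_simple sc V act \<longleftrightarrow>
     FA_module sc V act \<and> (\<exists>m. V m \<noteq> {0}) \<and>
     (\<forall>W. FA_submodule sc V act W \<longrightarrow> (\<forall>m. W m = {0}) \<or> W = V)"

definition FA_nat_trans ::
  "('k::field \<Rightarrow> 'v::ab_group_add \<Rightarrow> 'v) \<Rightarrow> (nat \<Rightarrow> 'v set)
    \<Rightarrow> ((nat \<Rightarrow> nat) \<Rightarrow> nat \<Rightarrow> nat \<Rightarrow> 'v \<Rightarrow> 'v)
    \<Rightarrow> ('k \<Rightarrow> 'w::ab_group_add \<Rightarrow> 'w) \<Rightarrow> (nat \<Rightarrow> 'w set)
    \<Rightarrow> ((nat \<Rightarrow> nat) \<Rightarrow> nat \<Rightarrow> nat \<Rightarrow> 'w \<Rightarrow> 'w) \<Rightarrow> (nat \<Rightarrow> 'v \<Rightarrow> 'w) \<Rightarrow> bool" where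
  "FA_nat_trans sc1 V1 act1 sc2 V2 act2 \<phi> \<longleftrightarrow>
     (\<forall>m. \<forall>x\<in>V1 m. \<phi> m x \<in> V2 m) \<and>
     (\<forall>m. \<forall>x\<in>V1 m. \<forall>y\<in>V1 m. \<phi> m (x + y) = \<phi> m x + \<phi> m y) \<and>
     (\<forall>m c. \<forall>x\<in>V1 m. \<phi> m (sc1 c x) = sc2 c (\<phi> m x)) \<and>
     (\<forall>m m' f. f \<in> FA_hom m m' \<longrightarrow>
        (\<forall>x\<in>V1 m. \<phi> m' (act1 f m m' x) = act2 f m m' (\<phi> m x)))"

definition FA_iso where
  "FA_iso sc1 V1 act1 sc2 V2 act2 \<longleftrightarrow>
     (\<exists>\<phi>. FA_nat_trans sc1 V1 act1 sc2 V2 act2 \<phi> \<and> (\<forall>m. bij_betw (\<phi> m) (V1 m) (V2 m)))"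

definition FA_quotient_of where
  "FA_quotient_of sc1 V1 act1 sc2 V2 act2 \<longleftrightarrow>
     (\<exists>\<phi>. FA_nat_trans sc1 V1 act1 sc2 V2 act2 \<phi> \<and> (\<forall>m. \<phi> m ` V1 m = V2 m))"

text \<open>F is a composition factor of M: F is simple and F is isomorphic to N/N' for
  submodules N' \<subseteq> N of M, i.e. F is a quotient of a submodule N of M.\<close>

definition FA_composition_factor where
  "FA_composition_factor sc2 V2 act2 sc1 V1 act1 \<longleftrightarrow>
     FA_simple sc2 V2 act2 \<and>
     (\<exists>N. FA_submodule sc1 V1 act1 N \<and> FA_quotient_of sc1 N act1 sc2 V2 act2)"

definition K0_val :: "nat \<Rightarrow> 'k::field set" where
  "K0_val m = (if m = 0 then UNIV else {0})"

definition K0_act :: "(nat \<Rightarrow> nat) \<Rightarrow> nat \<Rightarrow> nat \<Rightarrow> 'k::field \<Rightarrow> 'k" where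
  "K0_act f m m' x = (if m = 0 \<and> m' = 0 then x else 0)"

text \<open>P_n = kFA(n,-): P_n(m) = k-valued functions on FA_hom n m (basis = maps n -> m,
  i.e. pure tensors [g 0] \<otimes> ... \<otimes> [g (n-1)]), represented inside (nat => nat) => 'k.\<close>

definition Ptens_sc :: "'k::field \<Rightarrow> ((nat \<Rightarrow> nat) \<Rightarrow> 'k) \<Rightarrow> ((nat \<Rightarrow> nat) \<Rightarrow> 'k)" where
  "Ptens_sc c v = (\<lambda>g. c * v g)"

definition Ptens_act :: "nat \<Rightarrow> (nat \<Rightarrow> nat) \<Rightarrow> nat \<Rightarrow> nat
    \<Rightarrow> ((nat \<Rightarrow> nat) \<Rightarrow> 'k::field) \<Rightarrow> ((nat \<Rightarrow> nat) \<Rightarrow> 'k)" where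
  "Ptens_act n f m m' v = (\<lambda>g'. \<Sum>g\<in>{g\<in>FA_hom n m. compose {0..<n} f g = g'}. v g)"

text \<open>Pbar(m) = {sum_x a_x [x] : sum_x a_x = 0}, elements a : nat => 'k supported on {0..<m}.\<close>

definition Pbar1 :: "nat \<Rightarrow> (nat \<Rightarrow> 'k::field) set" where
  "Pbar1 m = {a. (\<forall>x\<ge>m. a x = 0) \<and> (\<Sum>x<m. a x) = 0}"

definition pure_tensor :: "nat \<Rightarrow> nat \<Rightarrow> (nat \<Rightarrow> nat \<Rightarrow> 'k::field) \<Rightarrow> ((nat \<Rightarrow> nat) \<Rightarrow> 'k)" where
  "pure_tensor n m a = (\<lambda>g. if g \<in> FA_hom n m then (\<Prod>i<n. a i (g i)) else 0)"

text \<open>Pbar^{\<otimes>n}(m): the span of pure tensors a_0 \<otimes> ... \<otimes> a_(n-1) with a_i \<in> Pbar(m),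
  inside P_n(m); by the convention Pbar^{\<otimes>0} = kbar it is 0 on the empty set
  (for n \<ge> 1 this clause is automatic).\<close>

definition Pbar_tensor :: "nat \<Rightarrow> nat \<Rightarrow> ((nat \<Rightarrow> nat) \<Rightarrow> 'k::field) set" where
  "Pbar_tensor n m = (if m = 0 then {0}
     else module.span Ptens_sc {pure_tensor n m a | a. \<forall>i<n. a i \<in> Pbar1 m})"

end

theory Submission
  imports Defs
begin

lemma vs_Ptens: "vector_space (Ptens_sc :: 'k::field \<Rightarrow> _)"
  unfolding vector_space_def module_def Ptens_sc_def
  by (auto simp: fun_eq_iff algebra_simps)

declare atLeast0LessThan[simp]

interpretation PT: vector_space "Ptens_sc :: 'k::field \<Rightarrow> ((nat \<Rightarrow> nat) \<Rightarrow> 'k) \<Rightarrow> _"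
  by (rule vs_Ptens)

lemma finite_FA_hom[simp]: "finite (FA_hom n m)"
  unfolding FA_hom_def by (rule finite_PiE) auto

definition push :: "(nat \<Rightarrow> nat) \<Rightarrow> nat \<Rightarrow> (nat \<Rightarrow> 'k::field) \<Rightarrow> (nat \<Rightarrow> 'k)" where
  "push f m a = (\<lambda>y. \<Sum>x\<in>{x\<in>{0..<m}. f x = y}. a x)"

lemma Ptens_act_add: "Ptens_act n f m m' (u + w) = Ptens_act n f m m' u + Ptens_act n f m m' w"
  by (simp add: Ptens_act_def fun_eq_iff sum.distrib)

lemma Ptens_act_sc: "Ptens_act n f m m' (Ptens_sc c u) = Ptens_sc c (Ptens_act n f m m' u)"
  by (simp add: Ptens_act_def Ptens_sc_def fun_eq_iff sum_distrib_left)

lemma Ptens_act_zero: "Ptens_act n f m m' 0 = 0"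
  by (simp add: Ptens_act_def fun_eq_iff)

lemma compose_in_FA_hom: "f \<in> FA_hom m m' \<Longrightarrow> g \<in> FA_hom n m \<Longrightarrow> compose {0..<n} f g \<in> FA_hom n m'"
  unfolding FA_hom_def by (auto simp: compose_def PiE_iff)

lemma PT_push:
  assumes f: "f \<in> FA_hom m m'"
  shows "Ptens_act n f m m' (pure_tensor n m a) = pure_tensor n m' (\<lambda>i. push f m (a i))"
proof (rule ext)
  fix g'
  show "Ptens_act n f m m' (pure_tensor n m a) g' = pure_tensor n m' (\<lambda>i. push f m (a i)) g'"
  proof (cases "g' \<in> FA_hom n m'")
    case False
    have e: "{g \<in> FA_hom n m. compose {0..<n} f g = g'} = {}"
      using compose_in_FA_hom[OF f] False by auto
    show ?thesis unfolding Ptens_act_def e using False by (simp add: pure_tensor_def)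
  next
    case True
    have eq: "{g \<in> FA_hom n m. compose {0..<n} f g = g'} = PiE {..<n} (\<lambda>i. {x\<in>{0..<m}. f x = g' i})"
    proof (intro set_eqI iffI)
      fix g assume "g \<in> {g \<in> FA_hom n m. compose {0..<n} f g = g'}"
      then show "g \<in> PiE {..<n} (\<lambda>i. {x\<in>{0..<m}. f x = g' i})"
        by (auto simp: FA_hom_def PiE_iff compose_def extensional_def)
    next
      fix g assume g: "g \<in> PiE {..<n} (\<lambda>i. {x\<in>{0..<m}. f x = g' i})"
      have "compose {0..<n} f g = g'"
        using g True by (auto simp: FA_hom_def PiE_iff compose_def extensional_def fun_eq_iff)
      then show "g \<in> {g \<in> FA_hom n m. compose {0..<n} f g = g'}"
        using g by (auto simp: FA_hom_def PiE_iff atLeast0LessThan)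
    qed
    have "Ptens_act n f m m' (pure_tensor n m a) g' = (\<Sum>g\<in>PiE {..<n} (\<lambda>i. {x\<in>{0..<m}. f x = g' i}). \<Prod>i<n. a i (g i))"
      unfolding Ptens_act_def eq pure_tensor_def
      by (rule sum.cong) (auto simp: FA_hom_def PiE_iff)
    also have "\<dots> = (\<Prod>i<n. push f m (a i) (g' i))"
      unfolding push_def by (rule prod_sum_PiE[symmetric]) auto
    finally show ?thesis using True by (simp add: pure_tensor_def)
  qed
qed

lemma push_Pbar1:
  assumes f: "f \<in> FA_hom m m'" and a: "a \<in> Pbar1 m"
  shows "push f m a \<in> Pbar1 m'"
proof -
  have e: "{x\<in>{0..<m}. f x = y} = {}" if "y \<ge> m'" for y
    using f that by (force simp: FA_hom_def PiE_iff)
  have "\<forall>x\<ge>m'. push f m a x = 0"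
  proof (intro allI impI)
    fix y assume "y \<ge> m'"
    show "push f m a y = 0" unfolding push_def e[OF \<open>y \<ge> m'\<close>] by simp
  qed
  moreover have "(\<Sum>y<m'. push f m a y) = (\<Sum>x<m. a x)"
    unfolding push_def
    using sum.group[of "{0..<m}" "{..<m'}" f a] f
    by (auto simp: FA_hom_def PiE_iff atLeast0LessThan)
  ultimately show ?thesis using a by (simp add: Pbar1_def)
qed

lemma FA_hom_pos: "f \<in> FA_hom m m' \<Longrightarrow> 0 < m \<Longrightarrow> 0 < m'"
  unfolding FA_hom_def by (auto simp: PiE_iff)

lemma Pbar_tensor_closed:
  assumes f: "f \<in> FA_hom m m'" and v: "v \<in> Pbar_tensor n m"
  shows "Ptens_act n f m m' v \<in> Pbar_tensor n m'"
proof (cases "m = 0")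
  case True
  then have "v = 0" using v by (simp add: Pbar_tensor_def)
  then show ?thesis by (simp add: Ptens_act_zero Pbar_tensor_def PT.span_zero)
next
  case False
  then have m': "m' \<noteq> 0" using FA_hom_pos[OF f] by auto
  have "v \<in> PT.span {pure_tensor n m a | a. \<forall>i<n. a i \<in> Pbar1 m}"
    using v False by (simp add: Pbar_tensor_def)
  then have "Ptens_act n f m m' v \<in> PT.span {pure_tensor n m' a | a. \<forall>i<n. a i \<in> Pbar1 m'}"
  proof (induction rule: PT.span_induct_alt)
    case base
    then show ?case unfolding Ptens_act_zero by (rule PT.span_zero)
  next
    case (step c x y)
    then obtain a where a: "x = pure_tensor n m a" "\<forall>i<n. a i \<in> Pbar1 m" by auto
    have "Ptens_act n f m m' x \<in> {pure_tensor n m' a | a. \<forall>i<n. a i \<in> Pbar1 m'}"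
      using a push_Pbar1[OF f] by (auto simp: PT_push[OF f])
    have e: "Ptens_act n f m m' (Ptens_sc c x + y) = Ptens_sc c (Ptens_act n f m m' x) + Ptens_act n f m m' y"
      by (simp only: Ptens_act_add Ptens_act_sc)
    show ?case unfolding e
      by (intro PT.span_add PT.span_scale PT.span_base step.IH) fact
  qed
  then show ?thesis using m' by (simp add: Pbar_tensor_def)
qed

lemma Ptens_act_comp:
  assumes f: "f \<in> FA_hom m m'" and g: "g \<in> FA_hom m' m''"
  shows "Ptens_act n (compose {..<m} g f) m m'' v = Ptens_act n g m' m'' (Ptens_act n f m m' v)"
proof (rule ext)
  fix k
  have cc: "compose {..<n} (compose {..<m} g f) g1 = compose {..<n} g (compose {..<n} f g1)"
    if "g1 \<in> FA_hom n m" for g1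
    using that by (auto simp: compose_def fun_eq_iff FA_hom_def PiE_iff)
  have "Ptens_act n g m' m'' (Ptens_act n f m m' v) k =
     (\<Sum>g2\<in>{g2 \<in> FA_hom n m'. compose {..<n} g g2 = k}.
        sum v {g1 \<in> {g1\<in>FA_hom n m. compose {..<n} g (compose {..<n} f g1) = k}. compose {..<n} f g1 = g2})"
    unfolding Ptens_act_def
    by (intro sum.cong refl arg_cong2[where f=sum]) auto
  also have "\<dots> = sum v {g1\<in>FA_hom n m. compose {..<n} g (compose {..<n} f g1) = k}"
    by (rule sum.group) (auto intro: compose_in_FA_hom[OF f, simplified])
  also have "\<dots> = Ptens_act n (compose {..<m} g f) m m'' v k"
    unfolding Ptens_act_def using cc by (intro arg_cong2[where f=sum] refl) auto
  finally show "Ptens_act n (compose {..<m} g f) m m'' v k = Ptens_act n g m' m'' (Ptens_act n f m m' v) k" ..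
qed

locale FAmod =
  fixes sc :: "'k::field \<Rightarrow> 'v::ab_group_add \<Rightarrow> 'v" and V act
  assumes FAm: "FA_module sc V act"
begin

sublocale vector_space sc using FAm by (simp add: FA_module_def)

lemma sub: "subspace (V m)" using FAm by (simp add: FA_module_def)

lemma act_in: "f \<in> FA_hom m m' \<Longrightarrow> x \<in> V m \<Longrightarrow> act f m m' x \<in> V m'"
  using FAm by (simp add: FA_module_def)

lemma act_add: "f \<in> FA_hom m m' \<Longrightarrow> x \<in> V m \<Longrightarrow> y \<in> V m \<Longrightarrow> act f m m' (x + y) = act f m m' x + act f m m' y"
  using FAm by (simp add: FA_module_def)

lemma act_sc: "f \<in> FA_hom m m' \<Longrightarrow> x \<in> V m \<Longrightarrow> act f m m' (sc c x) = sc c (act f m m' x)"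
  using FAm by (simp add: FA_module_def)

lemma act_id: "x \<in> V m \<Longrightarrow> act (restrict id {..<m}) m m x = x"
  using FAm by (simp add: FA_module_def)

lemma act_comp: "f \<in> FA_hom m m' \<Longrightarrow> g \<in> FA_hom m' m'' \<Longrightarrow> x \<in> V m \<Longrightarrow>
   act (compose {..<m} g f) m m'' x = act g m' m'' (act f m m' x)"
  using FAm by (simp add: FA_module_def)

lemma zero_in: "0 \<in> V m" using sub subspace_0 by blast

lemma act_zero: "f \<in> FA_hom m m' \<Longrightarrow> act f m m' 0 = 0"
  using act_add[of f m m' 0 0] zero_in by simp

lemma act_sum: "f \<in> FA_hom m m' \<Longrightarrow> (\<And>i. i \<in> I \<Longrightarrow> h i \<in> V m) \<Longrightarrow>
   act f m m' (sum h I) = (\<Sum>i\<in>I. act f m m' (h i))"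
proof (induction I rule: infinite_finite_induct)
  case (insert i I)
  have "sum h I \<in> V m" using insert sub by (auto intro: subspace_sum)
  then show ?case using insert by (simp add: act_add)
qed (simp_all add: act_zero)

lemma sum_in: "(\<And>i. i \<in> I \<Longrightarrow> h i \<in> V m) \<Longrightarrow> sum h I \<in> V m"
  using sub subspace_sum by blast

lemma sc_in: "x \<in> V m \<Longrightarrow> sc c x \<in> V m"
  using sub subspace_scale by blast

lemma add_in: "x \<in> V m \<Longrightarrow> y \<in> V m \<Longrightarrow> x + y \<in> V m"
  using sub subspace_add by blast

end

lemma sum_fun_apply: "(sum f A) x = (\<Sum>a\<in>A. f a x)"
  by (induction A rule: infinite_finite_induct) auto

lemma alt0:
  assumes "finite D"
  shows "(\<Sum>U\<in>Pow D. (-1::'a::comm_ring_1) ^ card U) = (if D = {} then 1 else 0)"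
proof -
  have "(\<Prod>x\<in>D. (1::'a) - 1) = (\<Sum>U\<in>Pow D. (-1) ^ card U * (\<Prod>x\<in>U. 1) * (\<Prod>x\<in>D-U. 1))"
    by (rule prod_diff_conv_sum[OF assms])
  show ?thesis
  proof (cases "D = {}")
    case False
    then have "card D > 0" using assms by (simp add: card_gt_0_iff)
    then have "(0::'a) ^ card D = 0" by (cases "card D") auto
    then show ?thesis using False \<open>(\<Prod>x\<in>D. (1::'a) - 1) = _\<close> by simp
  qed simp
qed

lemma coeff_lemma:
  assumes "finite Z"
  shows "(\<Sum>W\<in>Pow Z. (-1::'a::comm_ring_1) ^ card (Z - W) * (if I \<subseteq> W then 1 else 0)) = (if Z = I then 1 else 0)"
proof (cases "I \<subseteq> Z")
  case False
  then have "Z \<noteq> I" by auto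
  moreover have "(\<Sum>W\<in>Pow Z. (-1::'a) ^ card (Z - W) * (if I \<subseteq> W then 1 else 0)) = 0"
    using False by (intro sum.neutral) auto
  ultimately show ?thesis by simp
next
  case True
  have "(\<Sum>W\<in>Pow Z. (-1::'a) ^ card (Z - W) * (if I \<subseteq> W then 1 else 0))
      = (\<Sum>W\<in>Pow Z. if I \<subseteq> W then (-1::'a) ^ card (Z - W) else 0)"
    by (intro sum.cong) auto
  also have "\<dots> = (\<Sum>W\<in>{W\<in>Pow Z. I \<subseteq> W}. (-1::'a) ^ card (Z - W))"
    by (rule sum.inter_filter[symmetric]) (use assms in auto)
  also have "\<dots> = (\<Sum>U\<in>Pow (Z - I). (-1::'a) ^ card U)"
    by (rule sum.reindex_bij_witness[where i="\<lambda>U. Z - U" and j="\<lambda>W. Z - W"]) (use True in auto)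
  also have "\<dots> = (if Z = I then 1 else 0)"
    using assms True by (subst alt0) auto
  finally show ?thesis .
qed

definition Zs :: "nat \<Rightarrow> nat \<Rightarrow> nat set set" where
  "Zs m t = {Z. Z \<subseteq> {1..<m} \<and> card Z \<le> t}"

lemma finite_Zs: "finite (Zs m t)"
  unfolding Zs_def by (rule finite_subset[of _ "Pow {1..<m}"]) auto

definition eW :: "nat \<Rightarrow> nat set \<Rightarrow> nat \<Rightarrow> nat" where
  "eW m W = restrict (\<lambda>z. if z \<in> W then z else 0) {..<m}"

definition piW :: "nat set \<Rightarrow> (nat \<Rightarrow> 'k::field) \<Rightarrow> nat \<Rightarrow> 'k" where
  "piW W a = (\<lambda>z. if z \<in> W then a z else if z = 0 then - (\<Sum>y\<in>W. a y) else 0)"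

definition dl :: "nat \<Rightarrow> nat \<Rightarrow> 'k::field" where
  "dl y z = (if z = y then 1 else if z = 0 then -1 else 0)"

lemma eW_hom: "0 < m \<Longrightarrow> W \<subseteq> {1..<m} \<Longrightarrow> eW m W \<in> FA_hom m m"
  unfolding eW_def FA_hom_def by (auto simp: PiE_iff)

lemma push_eW:
  assumes m: "0 < m" and W: "W \<subseteq> {1..<m}" and a: "a \<in> Pbar1 m"
  shows "push (eW m W) m a = piW W a"
proof (rule ext)
  fix z
  show "push (eW m W) m a z = piW W a z"
  proof (cases "z \<in> W")
    case True
    then have "{x \<in> {0..<m}. eW m W x = z} = {z}" using W by (auto simp: eW_def)
    then show ?thesis using True by (simp add: push_def piW_def)
  next
    case False
    show ?thesis
    proof (cases "z = 0")
      case True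
      have e: "{x \<in> {0..<m}. eW m W x = z} = {..<m} - W" using W True by (auto simp: eW_def)
      have "(\<Sum>x<m. a x) = 0" using a by (simp add: Pbar1_def)
      moreover have "(\<Sum>x<m. a x) = (\<Sum>x\<in>{..<m} - W. a x) + (\<Sum>x\<in>W. a x)"
        using W by (subst sum.subset_diff[of W]) auto
      ultimately have "(\<Sum>x\<in>{..<m} - W. a x) = - (\<Sum>x\<in>W. a x)"
        by (simp add: eq_neg_iff_add_eq_0)
      then show ?thesis using True False unfolding push_def e by (simp add: piW_def)
    next
      case False': False
      have e: "{x \<in> {0..<m}. eW m W x = z} = {}" using False False' by (auto simp: eW_def)
      show ?thesis using False False' unfolding push_def e by (simp add: piW_def)
    qed
  qed
qed

lemma piW_expand:
  assumes W: "W \<subseteq> {1..<m}"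
  shows "piW W b z = (\<Sum>y\<in>W. b y * dl y z)"
proof -
  have fW: "finite W" using W finite_subset by blast
  show ?thesis
  proof (cases "z \<in> W")
    case True
    then have "(\<Sum>y\<in>W. b y * dl y z) = b z * dl z z"
      using W fW by (subst sum.remove[of W z]) (auto simp: dl_def intro!: sum.neutral)
    then show ?thesis using True by (simp add: piW_def dl_def)
  next
    case False
    show ?thesis
    proof (cases "z = 0")
      case True
      then have "(\<Sum>y\<in>W. b y * dl y z) = (\<Sum>y\<in>W. - b y)"
        using W by (intro sum.cong) (auto simp: dl_def)
      then show ?thesis using True False by (simp add: piW_def sum_negf)
    next
      case False': False
      then have "(\<Sum>y\<in>W. b y * dl y z) = 0"
        using False by (intro sum.neutral) (auto simp: dl_def)
      then show ?thesis using False False' by (simp add: piW_def)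
    qed
  qed
qed

lemma Pbar1_piW:
  assumes a: "a \<in> Pbar1 m" and m: "0 < m"
  shows "a = piW {1..<m} a"
proof (rule ext)
  fix z
  have s: "(\<Sum>x<m. a x) = 0" using a by (simp add: Pbar1_def)
  have "(\<Sum>x<m. a x) = a 0 + (\<Sum>x\<in>{1..<m}. a x)"
    using sum.atLeast_Suc_lessThan[OF m, of a] by (simp del: atLeast0LessThan add: atLeast0LessThan[symmetric])
  then have a0: "a 0 = - (\<Sum>x\<in>{1..<m}. a x)" using s by (simp add: eq_neg_iff_add_eq_0)
  show "a z = piW {1..<m} a z"
    using a a0 by (auto simp: piW_def Pbar1_def)
qed

lemma PiE_sub_eq:
  assumes "W \<subseteq> X"
  shows "PiE {..<t} (\<lambda>_. W) = {ys \<in> PiE {..<t} (\<lambda>_. X). ys ` {..<t} \<subseteq> W}"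
  using assms by (auto simp: PiE_iff extensional_def)

lemma pointwise_ident:
  fixes a :: "nat \<Rightarrow> nat \<Rightarrow> 'k::field"
  assumes m: "0 < m" and a: "\<forall>i<t. a i \<in> Pbar1 m"
  shows "(\<Prod>i<t. a i (g i)) =
    (\<Sum>Z\<in>Zs m t. \<Sum>W\<in>Pow Z. (-1) ^ card (Z - W) * (\<Prod>i<t. piW W (a i) (g i)))"
proof -
  define X where "X = {1..<m}"
  define T where "T ys = (\<Prod>i<t. a i (ys i) * dl (ys i) (g i))" for ys
  define Y where "Y = PiE {..<t} (\<lambda>_. X)"
  have fY: "finite Y" unfolding Y_def X_def by (rule finite_PiE) auto
  have W1: "\<And>W. W \<subseteq> X \<Longrightarrow> (\<Prod>i<t. piW W (a i) (g i)) = (\<Sum>ys\<in>Y. (if ys ` {..<t} \<subseteq> W then T ys else 0))"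
  proof -
    fix W assume W: "W \<subseteq> X"
    have fW: "finite W" using W X_def finite_subset by blast
    have "(\<Prod>i<t. piW W (a i) (g i)) = (\<Prod>i<t. \<Sum>y\<in>W. a i y * dl y (g i))"
      using W X_def by (simp add: piW_expand)
    also have "\<dots> = (\<Sum>ys\<in>PiE {..<t} (\<lambda>_. W). T ys)"
      unfolding T_def by (rule prod_sum_PiE) (use fW in auto)
    also have "\<dots> = (\<Sum>ys\<in>Y. (if ys ` {..<t} \<subseteq> W then T ys else 0))"
      unfolding Y_def PiE_sub_eq[OF W] using fY[unfolded Y_def] by (simp add: sum.If_cases Int_def)
    finally show "?thesis W" .
  qed
  have L: "(\<Prod>i<t. a i (g i)) = (\<Sum>ys\<in>Y. T ys)"
  proof -
    have ai: "a i = piW X (a i)" if "i < t" for i using Pbar1_piW[OF _ m] a that X_def by auto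
    have "(\<Prod>i<t. a i (g i)) = (\<Prod>i<t. piW X (a i) (g i))"
      by (intro prod.cong refl) (metis ai lessThan_iff)
    also have "\<dots> = (\<Sum>ys\<in>Y. (if ys ` {..<t} \<subseteq> X then T ys else 0))" using W1[of X] by simp
    also have "\<dots> = (\<Sum>ys\<in>Y. T ys)" by (rule sum.cong) (auto simp: Y_def PiE_iff)
    finally show ?thesis .
  qed
  have ZX: "\<And>Z W. Z \<in> Zs m t \<Longrightarrow> W \<in> Pow Z \<Longrightarrow> W \<subseteq> X" by (auto simp: Zs_def X_def)
  have "(\<Sum>Z\<in>Zs m t. \<Sum>W\<in>Pow Z. (-1) ^ card (Z - W) * (\<Prod>i<t. piW W (a i) (g i)))
     = (\<Sum>Z\<in>Zs m t. \<Sum>W\<in>Pow Z. \<Sum>ys\<in>Y. T ys * ((-1) ^ card (Z - W) * (if ys ` {..<t} \<subseteq> W then 1 else 0)))"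
  proof (intro sum.cong refl)
    fix Z W assume "Z \<in> Zs m t" "W \<in> Pow Z"
    then have WX: "W \<subseteq> X" by (rule ZX)
    show "(-1) ^ card (Z - W) * (\<Prod>i<t. piW W (a i) (g i)) = (\<Sum>ys\<in>Y. T ys * ((-1) ^ card (Z - W) * (if ys ` {..<t} \<subseteq> W then 1 else 0)))"
      unfolding W1[OF WX] sum_distrib_left by (intro sum.cong refl) simp
  qed
  also have "\<dots> = (\<Sum>Z\<in>Zs m t. \<Sum>ys\<in>Y. \<Sum>W\<in>Pow Z. T ys * ((-1) ^ card (Z - W) * (if ys ` {..<t} \<subseteq> W then 1 else 0)))"
    by (intro sum.cong refl) (rule sum.swap)
  also have "\<dots> = (\<Sum>ys\<in>Y. \<Sum>Z\<in>Zs m t. \<Sum>W\<in>Pow Z. T ys * ((-1) ^ card (Z - W) * (if ys ` {..<t} \<subseteq> W then 1 else 0)))"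
    by (rule sum.swap)
  also have "\<dots> = (\<Sum>ys\<in>Y. T ys * (\<Sum>Z\<in>Zs m t. \<Sum>W\<in>Pow Z. (-1) ^ card (Z - W) * (if ys ` {..<t} \<subseteq> W then 1 else 0)))"
    by (simp only: sum_distrib_left)
  also have "\<dots> = (\<Sum>ys\<in>Y. T ys)"
  proof (intro sum.cong refl)
    fix ys assume ys: "ys \<in> Y"
    define I where "I = ys ` {..<t}"
    have "I \<subseteq> X" using ys unfolding I_def Y_def by (auto simp: PiE_iff)
    moreover have "card I \<le> t" unfolding I_def using card_image_le[of "{..<t}" ys] by simp
    ultimately have I: "I \<in> Zs m t" unfolding Zs_def X_def by simp
    have fZ: "\<And>Z. Z \<in> Zs m t \<Longrightarrow> finite Z" unfolding Zs_def using finite_subset[of _ "{1..<m}"] by blast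
    have "(\<Sum>Z\<in>Zs m t. \<Sum>W\<in>Pow Z. (-1::'k) ^ card (Z - W) * (if I \<subseteq> W then 1 else 0))
        = (\<Sum>Z\<in>Zs m t. if Z = I then 1 else 0)"
      by (intro sum.cong refl coeff_lemma fZ)
    also have "\<dots> = 1" using I finite_Zs by simp
    finally show "T ys * (\<Sum>Z\<in>Zs m t. \<Sum>W\<in>Pow Z. (-1) ^ card (Z - W) * (if ys ` {..<t} \<subseteq> W then 1 else 0)) = T ys"
      unfolding I_def by simp
  qed
  finally show ?thesis using L by simp
qed


lemma pt_cong: "(\<And>i. i < n \<Longrightarrow> b i = b' i) \<Longrightarrow> pure_tensor n m b = pure_tensor n m b'"
  unfolding pure_tensor_def by (intro ext if_cong refl prod.cong) auto

definition Rop :: "nat \<Rightarrow> nat \<Rightarrow> ((nat \<Rightarrow> nat) \<Rightarrow> 'k::field) \<Rightarrow> ((nat \<Rightarrow> nat) \<Rightarrow> 'k)" where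
  "Rop m t v = (\<Sum>Z\<in>Zs m t. \<Sum>W\<in>Pow Z. Ptens_sc ((-1) ^ card (Z - W)) (Ptens_act t (eW m W) m m v))"

lemma ident_pt:
  fixes a :: "nat \<Rightarrow> nat \<Rightarrow> 'k::field"
  assumes m: "0 < m" and a: "\<forall>i<t. a i \<in> Pbar1 m"
  shows "Rop m t (pure_tensor t m a) = pure_tensor t m a"
proof -
  have WZ: "W \<subseteq> {1..<m}" if "Z \<in> Zs m t" "W \<in> Pow Z" for Z W using that by (auto simp: Zs_def)
  have e: "Ptens_act t (eW m W) m m (pure_tensor t m a) = pure_tensor t m (\<lambda>i. piW W (a i))"
    if "W \<subseteq> {1..<m}" for W
    using that a m by (simp add: PT_push eW_hom push_eW cong: pt_cong)
  have "Rop m t (pure_tensor t m a) = (\<Sum>Z\<in>Zs m t. \<Sum>W\<in>Pow Z. Ptens_sc ((-1) ^ card (Z - W)) (pure_tensor t m (\<lambda>i. piW W (a i))))"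
    unfolding Rop_def using e WZ by (intro sum.cong refl) auto
  also have "\<dots> = pure_tensor t m a"
  proof (rule ext)
    fix g
    show "(\<Sum>Z\<in>Zs m t. \<Sum>W\<in>Pow Z. Ptens_sc ((-1) ^ card (Z - W)) (pure_tensor t m (\<lambda>i. piW W (a i)))) g = pure_tensor t m a g"
    proof (cases "g \<in> FA_hom t m")
      case True
      then show ?thesis
        using pointwise_ident[OF m a, of g]
        by (simp add: sum_fun_apply Ptens_sc_def pure_tensor_def)
    next
      case False
      then show ?thesis by (simp add: sum_fun_apply Ptens_sc_def pure_tensor_def)
    qed
  qed
  finally show ?thesis .
qed

lemma Rop_zero: "Rop m t 0 = 0"
  unfolding Rop_def Ptens_act_zero PT.scale_zero_right by simp

lemma Rop_lin: "Rop m t (Ptens_sc c x + y) = Ptens_sc c (Rop m t x) + Rop m t y"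
  unfolding Rop_def Ptens_act_add Ptens_act_sc PT.scale_right_distrib sum.distrib PT.scale_sum_right
  by (simp add: PT.scale_left_commute mult.commute)

lemma ident_span:
  assumes m: "0 < m" and v: "v \<in> Pbar_tensor t m"
  shows "Rop m t v = v"
proof -
  have "v \<in> PT.span {pure_tensor t m a | a. \<forall>i<t. a i \<in> Pbar1 m}"
    using v m by (simp add: Pbar_tensor_def)
  then show ?thesis
  proof (induction rule: PT.span_induct_alt)
    case base
    then show ?case by (rule Rop_zero)
  next
    case (step c x y)
    then obtain a where a: "x = pure_tensor t m a" "\<forall>i<t. a i \<in> Pbar1 m" by auto
    show ?case unfolding Rop_lin using ident_pt[OF m a(2)] a(1) step.IH by simp
  qed
qed


lemma factor_through:
  assumes f: "f \<in> FA_hom m m'" and A: "f ` {..<m} \<subseteq> A" "A \<subseteq> {..<m'}"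
    and card: "card A \<le> k" and m': "0 < m'"
  shows "\<exists>h g. h \<in> FA_hom m k \<and> g \<in> FA_hom k m' \<and> compose {..<m} g h = f"
proof -
  have fA: "finite A" using A(2) finite_subset by blast
  obtain \<iota> where \<iota>: "\<iota> ` A \<subseteq> {..<k}" "inj_on \<iota> A"
    using card_le_inj[of A "{..<k}"] fA card by auto
  define h where "h = restrict (\<lambda>x. \<iota> (f x)) {..<m}"
  define g where "g = restrict (\<lambda>j. if j \<in> \<iota> ` A then the_inv_into A \<iota> j else 0) {..<k}"
  have "h \<in> FA_hom m k" using A \<iota> by (auto simp: h_def FA_hom_def PiE_iff)
  moreover have "g \<in> FA_hom k m'"
    unfolding g_def FA_hom_def using the_inv_into_into[OF \<iota>(2) _ A(2)] m' by (auto simp: PiE_iff)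
  moreover have "compose {..<m} g h = f"
  proof (rule ext)
    fix x
    show "compose {..<m} g h x = f x"
    proof (cases "x < m")
      case True
      then have "f x \<in> A" using A by auto
      then show ?thesis using True \<iota> by (simp add: compose_def h_def g_def the_inv_into_f_f subset_eq)
    next
      case False
      then show ?thesis using f by (auto simp: compose_def FA_hom_def PiE_iff extensional_def)
    qed
  qed
  ultimately show ?thesis by blast
qed

lemma eW_factor:
  assumes m: "0 < m" and Z: "Z \<in> Zs m t" and W: "W \<in> Pow Z"
  shows "\<exists>h g. h \<in> FA_hom m (Suc t) \<and> g \<in> FA_hom (Suc t) m \<and> compose {..<m} g h = eW m W"
proof -
  have WZ: "W \<subseteq> {1..<m}" "card Z \<le> t" "finite Z" using Z W finite_subset[of Z "{1..<m}"] by (auto simp: Zs_def)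
  have "card W \<le> t" using WZ W card_mono[of Z W] by auto
  then have "card (insert 0 W) \<le> Suc t" by (metis card_insert_le_m1 card_insert_if diff_Suc_1 le_SucI not_less_eq_eq zero_less_Suc) 
  moreover have "eW m W ` {..<m} \<subseteq> insert 0 W" by (auto simp: eW_def)
  moreover have "insert 0 W \<subseteq> {..<m}" using WZ m by auto
  ultimately show ?thesis using factor_through[OF eW_hom[OF m WZ(1)]] m by blast
qed

theorem part2:
  fixes sc :: "'k::field \<Rightarrow> 'v::ab_group_add \<Rightarrow> 'v"
  assumes simp: "FA_simple sc V act"
    and cf: "FA_composition_factor sc V act (Ptens_sc :: 'k \<Rightarrow> _) (Pbar_tensor t) (Ptens_act t)"
  shows "V (Suc t) \<noteq> {0}"
proof
  assume V0: "V (Suc t) = {0}"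
  interpret FAmod sc V act using simp by (simp add: FA_simple_def FAmod_def)
  from cf obtain N \<phi> where N: "FA_submodule Ptens_sc (Pbar_tensor t) (Ptens_act t) N"
    and \<phi>: "FA_nat_trans Ptens_sc N (Ptens_act t) sc V act \<phi>" and surj: "\<forall>m. \<phi> m ` N m = V m"
    unfolding FA_composition_factor_def FA_quotient_of_def by blast
  have Nsub: "\<And>m. PT.subspace (N m)" and NP: "\<And>m. N m \<subseteq> Pbar_tensor t m"
    and Nact: "\<And>m m' f u. f \<in> FA_hom m m' \<Longrightarrow> u \<in> N m \<Longrightarrow> Ptens_act t f m m' u \<in> N m'"
    using N by (auto simp: FA_submodule_def)
  have \<phi>in: "\<And>m u. u \<in> N m \<Longrightarrow> \<phi> m u \<in> V m"
    and \<phi>add: "\<And>m u w. u \<in> N m \<Longrightarrow> w \<in> N m \<Longrightarrow> \<phi> m (u + w) = \<phi> m u + \<phi> m w"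
    and \<phi>sc: "\<And>m c u. u \<in> N m \<Longrightarrow> \<phi> m (Ptens_sc c u) = sc c (\<phi> m u)"
    and \<phi>nat: "\<And>m m' f u. f \<in> FA_hom m m' \<Longrightarrow> u \<in> N m \<Longrightarrow> \<phi> m' (Ptens_act t f m m' u) = act f m m' (\<phi> m u)"
    using \<phi> unfolding FA_nat_trans_def by blast+
  have \<phi>0: "\<phi> m 0 = 0" for m
    using \<phi>add[of 0 m 0] PT.subspace_0[OF Nsub[of m]] by simp
  have \<phi>sum: "\<phi> m (sum u I) = (\<Sum>i\<in>I. \<phi> m (u i))" if "\<And>i. i \<in> I \<Longrightarrow> u i \<in> N m" for m u and I :: "'a set"
    using that
  proof (induction I rule: infinite_finite_induct)
    case (insert i I)
    have "sum u I \<in> N m" using insert Nsub by (auto intro: PT.subspace_sum)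
    have "\<phi> m (sum u (insert i I)) = \<phi> m (u i + sum u I)" using insert(1,2) by (metis sum.insert)
    also have "\<dots> = \<phi> m (u i) + \<phi> m (sum u I)" using \<phi>add \<open>sum u I \<in> N m\<close> insert.prems by blast
    also have "\<dots> = \<phi> m (u i) + (\<Sum>i\<in>I. \<phi> m (u i))" using insert.IH insert.prems by simp
    finally show ?case using insert(1,2) by (metis sum.insert)
  qed (simp_all add: \<phi>0)
  from simp obtain m where "V m \<noteq> {0}" unfolding FA_simple_def by blast
  then obtain x where x: "x \<in> V m" "x \<noteq> 0" using zero_in by blast
  then obtain v where v: "v \<in> N m" "\<phi> m v = x" using surj[rule_format, of m] by (metis imageE)
  have m: "0 < m"
  proof (rule ccontr)
    assume "\<not> 0 < m"
    then have "m = 0" by simp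
    then have "v = 0" using v NP[of m] by (auto simp: Pbar_tensor_def)
    then show False using v x \<phi>0 by simp
  qed
  have vP: "v \<in> Pbar_tensor t m" using v NP by blast
  have terms: "Ptens_act t (eW m W) m m v \<in> N m" if "Z \<in> Zs m t" "W \<in> Pow Z" for Z W
    using Nact[OF eW_hom[OF m] v(1)] that by (auto simp: Zs_def)
  have zero_terms: "\<phi> m (Ptens_act t (eW m W) m m v) = 0" if ZW: "Z \<in> Zs m t" "W \<in> Pow Z" for Z W
  proof -
    obtain h g where hg: "h \<in> FA_hom m (Suc t)" "g \<in> FA_hom (Suc t) m" "compose {..<m} g h = eW m W"
      using eW_factor[OF m ZW] by blast
    have u: "Ptens_act t h m (Suc t) v \<in> N (Suc t)" using Nact[OF hg(1) v(1)] .
    have "\<phi> m (Ptens_act t (eW m W) m m v) = \<phi> m (Ptens_act t g (Suc t) m (Ptens_act t h m (Suc t) v))"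
      by (metis Ptens_act_comp[OF hg(1,2)] hg(3))
    also have "\<dots> = act g (Suc t) m (\<phi> (Suc t) (Ptens_act t h m (Suc t) v))"
      by (rule \<phi>nat[OF hg(2) u])
    also have "\<dots> = 0" using \<phi>in[OF u] V0 act_zero[OF hg(2)] by simp
    finally show ?thesis .
  qed
  have "x = \<phi> m (Rop m t v)" using ident_span[OF m vP] v by simp
  also have "\<dots> = (\<Sum>Z\<in>Zs m t. \<Sum>W\<in>Pow Z. \<phi> m (Ptens_sc ((-1) ^ card (Z - W)) (Ptens_act t (eW m W) m m v)))"
    unfolding Rop_def
    apply (subst \<phi>sum)
     apply (rule PT.subspace_sum[OF Nsub])
     apply (rule PT.subspace_scale[OF Nsub])
     apply (erule (1) terms)
    apply (rule sum.cong[OF refl])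
    apply (rule \<phi>sum)
    apply (rule PT.subspace_scale[OF Nsub])
    apply (erule (1) terms)
    done
  also have "\<dots> = 0"
    using zero_terms terms by (auto simp: \<phi>sc intro!: sum.neutral)
  finally show False using x by simp
qed

definition ind :: "nat \<Rightarrow> nat \<Rightarrow> 'k::field" where
  "ind z = (\<lambda>w. if w = z then 1 else 0)"

lemma prod_upd_split:
  fixes n i :: nat and b :: "nat \<Rightarrow> nat \<Rightarrow> 'k::field"
  assumes "i < n"
  shows "(\<Prod>j<n. (b(i := u)) j (g j)) = u (g i) * (\<Prod>j\<in>{..<n} - {i}. b j (g j))"
proof -
  have "(\<Prod>j<n. (b(i := u)) j (g j)) = (b(i := u)) i (g i) * (\<Prod>j\<in>{..<n} - {i}. (b(i := u)) j (g j))"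
    using assms by (metis finite_lessThan lessThan_iff prod.remove)
  also have "(\<Prod>j\<in>{..<n} - {i}. (b(i := u)) j (g j)) = (\<Prod>j\<in>{..<n} - {i}. b j (g j))"
    by (rule prod.cong) auto
  finally show ?thesis by simp
qed

lemma pt_upd_add:
  assumes "i < n"
  shows "pure_tensor n X (b(i := (\<lambda>w. u w + v w))) = pure_tensor n X (b(i := u)) + pure_tensor n X (b(i := v))"
  unfolding pure_tensor_def plus_fun_def
  by (rule ext) (simp only: prod_upd_split[OF assms] if_distrib distrib_right split: if_split, simp)

lemma pt_upd_sc:
  assumes "i < n"
  shows "pure_tensor n X (b(i := (\<lambda>w. c * u w))) = Ptens_sc c (pure_tensor n X (b(i := u)))"
  unfolding pure_tensor_def Ptens_sc_def
  by (rule ext) (simp only: prod_upd_split[OF assms] split: if_split, simp)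

lemma pt_cong2:
  assumes "\<And>i w. i < n \<Longrightarrow> w < X \<Longrightarrow> b i w = b' i w"
  shows "pure_tensor n X b = pure_tensor n X b'"
  unfolding pure_tensor_def
proof (intro ext if_cong refl)
  fix g assume "g \<in> FA_hom n X"
  then show "(\<Prod>i<n. b i (g i)) = (\<Prod>i<n. b' i (g i))"
    using assms by (intro prod.cong) (auto simp: FA_hom_def PiE_iff)
qed

definition extz :: "nat \<Rightarrow> nat \<Rightarrow> nat \<Rightarrow> (nat \<Rightarrow> nat) \<Rightarrow> (nat \<Rightarrow> nat)" where
  "extz s m z g' = restrict (\<lambda>i. if i < s then g' i else z) {..<m}"

lemma extz_hom: "g' \<in> FA_hom s X \<Longrightarrow> z < X \<Longrightarrow> extz s m z g' \<in> FA_hom m X"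
  unfolding extz_def FA_hom_def by (auto simp: PiE_iff)

lemma extz_inj: "s \<le> m \<Longrightarrow> inj_on (extz s m z) (FA_hom s X)"
proof (rule inj_onI)
  fix g1 g2 assume sm: "s \<le> m" and g: "g1 \<in> FA_hom s X" "g2 \<in> FA_hom s X" and e: "extz s m z g1 = extz s m z g2"
  show "g1 = g2"
  proof (rule ext)
    fix i show "g1 i = g2 i"
    proof (cases "i < s")
      case True
      then show ?thesis using fun_cong[OF e, of i] sm by (simp add: extz_def)
    next
      case False
      then show ?thesis using g by (auto simp: FA_hom_def PiE_iff extensional_def)
    qed
  qed
qed

lemma extz_image:
  assumes sm: "s \<le> m" and g: "g \<in> FA_hom m X" and gz: "\<forall>i\<in>{s..<m}. g i = z"
  shows "g \<in> extz s m z ` FA_hom s X"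
proof
  show "restrict g {..<s} \<in> FA_hom s X" using g sm by (auto simp: FA_hom_def PiE_iff)
  show "g = extz s m z (restrict g {..<s})"
  proof (rule ext)
    fix i show "g i = extz s m z (restrict g {..<s}) i"
      using g gz by (auto simp: extz_def FA_hom_def PiE_iff extensional_def)
  qed
qed

lemma pt_extz:
  assumes sm: "s \<le> m" and g': "g' \<in> FA_hom s X" and z: "z < X"
  shows "pure_tensor m X (\<lambda>i. if i < s then a i else ind z) (extz s m z g') = pure_tensor s X a g'"
proof -
  have "(\<Prod>i<m. (if i < s then a i else ind z) (extz s m z g' i)) = (\<Prod>i<s. (if i < s then a i else ind z) (extz s m z g' i))"
    using sm by (intro prod.mono_neutral_right) (auto simp: extz_def ind_def)
  also have "\<dots> = (\<Prod>i<s. a i (g' i))"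
    using sm by (intro prod.cong) (auto simp: extz_def)
  finally show ?thesis using extz_hom[OF g' z] g' by (simp add: pure_tensor_def)
qed

lemma pt_off_extz:
  assumes sm: "s \<le> m" and g: "g \<in> FA_hom m X" and ng: "g \<notin> extz s m z ` FA_hom s X"
  shows "pure_tensor m X (\<lambda>i. if i < s then a i else ind z) g = (0::'k::field)"
proof -
  obtain i where i: "i \<in> {s..<m}" "g i \<noteq> z" using extz_image[OF sm g] ng by blast
  have "(\<Prod>i<m. (if i < s then a i else ind z) (g i)) = 0"
    using i by (intro prod_zero) (auto simp: ind_def intro!: bexI[of _ i])
  then show ?thesis by (simp add: pure_tensor_def)
qed

lemma compose_extz:
  "compose {..<m} f (extz s m z g') = extz s m (f z) (compose {..<s} f g')"
  by (auto simp: compose_def extz_def fun_eq_iff)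

context FAmod
begin

definition Phi :: "nat \<Rightarrow> 'v \<Rightarrow> nat \<Rightarrow> ((nat \<Rightarrow> nat) \<Rightarrow> 'k) \<Rightarrow> 'v" where
  "Phi m x X u = (\<Sum>g\<in>FA_hom m X. sc (u g) (act g m X x))"

lemma Phi_in: "x \<in> V m \<Longrightarrow> Phi m x X u \<in> V X"
  unfolding Phi_def by (intro sum_in sc_in act_in) auto

lemma Phi_add: "Phi m x X (u + w) = Phi m x X u + Phi m x X w"
  unfolding Phi_def by (simp add: scale_left_distrib sum.distrib)

lemma Phi_sc: "Phi m x X (Ptens_sc c u) = sc c (Phi m x X u)"
  unfolding Phi_def Ptens_sc_def by (simp add: scale_sum_right)


lemma sum_ind: "z < X \<Longrightarrow> (\<Sum>w<X. ind z w) = (1::'k)"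
  by (simp add: ind_def)

lemma E1:
  assumes VAN: "\<And>j X b. s \<le> j \<Longrightarrow> j < m \<Longrightarrow> (\<forall>i\<in>insert j {..<s}. b i \<in> Pbar1 X) \<Longrightarrow> Phi m x X (pure_tensor m X b) = 0"
    and X: "0 < X" and i: "s \<le> i" "i < m" and b: "\<forall>k<s. b k \<in> Pbar1 X"
  shows "Phi m x X (pure_tensor m X b) = sc (\<Sum>w<X. b i w) (Phi m x X (pure_tensor m X (b(i := ind 0))))"
proof -
  define c where "c = (\<Sum>w<X. b i w)"
  define d where "d = (\<lambda>w. (if w < X then b i w else 0) - c * ind 0 w)"
  have "(\<Sum>w<X. d w) = c - c * (\<Sum>w<X. ind 0 w)"
    unfolding d_def c_def by (simp add: sum_subtractf sum_distrib_left)
  also have "\<dots> = 0" using sum_ind[OF X] by simp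
  finally have "(\<Sum>w<X. d w) = 0" .
  moreover have "\<forall>w\<ge>X. d w = 0" using X by (auto simp: d_def ind_def)
  ultimately have dP: "d \<in> Pbar1 X" by (simp add: Pbar1_def)
  have "pure_tensor m X b = pure_tensor m X (b(i := (\<lambda>w. d w + c * ind 0 w)))"
    by (rule pt_cong2) (auto simp: d_def)
  also have "\<dots> = pure_tensor m X (b(i := d)) + Ptens_sc c (pure_tensor m X (b(i := ind 0)))"
    by (simp only: pt_upd_add[OF i(2)] pt_upd_sc[OF i(2)])
  finally have e: "pure_tensor m X b = pure_tensor m X (b(i := d)) + Ptens_sc c (pure_tensor m X (b(i := ind 0)))" .
  have "Phi m x X (pure_tensor m X (b(i := d))) = 0"
    by (rule VAN[OF i]) (use b dP i in auto)
  then show ?thesis unfolding e Phi_add Phi_sc c_def by simp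
qed

lemma E2:
  assumes VAN: "\<And>j X b. s \<le> j \<Longrightarrow> j < m \<Longrightarrow> (\<forall>i\<in>insert j {..<s}. b i \<in> Pbar1 X) \<Longrightarrow> Phi m x X (pure_tensor m X b) = 0"
    and X: "0 < X" and J: "finite J" "J \<subseteq> {s..<m}" and b: "\<forall>k<s. b k \<in> Pbar1 X"
  shows "Phi m x X (pure_tensor m X b) = sc (\<Prod>j\<in>J. \<Sum>w<X. b j w) (Phi m x X (pure_tensor m X (\<lambda>k. if k \<in> J then ind 0 else b k)))"
  using J
proof (induction J rule: finite_induct)
  case empty
  then show ?case by simp
next
  case (insert j J)
  define bJ where "bJ = (\<lambda>k. if k \<in> J then ind 0 else b k)"
  have IH: "Phi m x X (pure_tensor m X b) = sc (\<Prod>j\<in>J. \<Sum>w<X. b j w) (Phi m x X (pure_tensor m X bJ))"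
    using insert unfolding bJ_def by simp
  have bJP: "\<forall>k<s. bJ k \<in> Pbar1 X" using b insert.prems by (auto simp: bJ_def)
  have j: "s \<le> j" "j < m" using insert.prems by auto
  have "Phi m x X (pure_tensor m X bJ) = sc (\<Sum>w<X. bJ j w) (Phi m x X (pure_tensor m X (bJ(j := ind 0))))"
    by (rule E1[OF VAN X j bJP])
  moreover have "bJ j = b j" using insert.hyps by (simp add: bJ_def)
  moreover have "bJ(j := ind 0) = (\<lambda>k. if k \<in> insert j J then ind 0 else b k)"
    by (auto simp: bJ_def fun_eq_iff)
  ultimately show ?case using IH insert.hyps by (simp add: mult.commute)
qed


definition psi :: "nat \<Rightarrow> nat \<Rightarrow> 'v \<Rightarrow> nat \<Rightarrow> nat \<Rightarrow> ((nat \<Rightarrow> nat) \<Rightarrow> 'k) \<Rightarrow> 'v" where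
  "psi m s x z X v = (if X = 0 then 0 else \<Sum>g'\<in>FA_hom s X. sc (v g') (act (extz s m z g') m X x))"

lemma PSI:
  assumes X: "0 < X" and z: "z < X" and sm: "s \<le> m"
  shows "psi m s x z X (pure_tensor s X a) = Phi m x X (pure_tensor m X (\<lambda>i. if i < s then a i else ind z))"
proof -
  let ?b = "\<lambda>i. if i < s then a i else ind z"
  let ?E = "extz s m z ` FA_hom s X"
  have sub: "?E \<subseteq> FA_hom m X" using extz_hom[OF _ z] by auto
  have "Phi m x X (pure_tensor m X ?b) = (\<Sum>g\<in>?E. sc (pure_tensor m X ?b g) (act g m X x))"
    unfolding Phi_def
    by (rule sum.mono_neutral_right) (use sub pt_off_extz[OF sm] in auto)
  also have "\<dots> = (\<Sum>g'\<in>FA_hom s X. sc (pure_tensor m X ?b (extz s m z g')) (act (extz s m z g') m X x))"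
    by (rule sum.reindex[OF extz_inj[OF sm], unfolded comp_def])
  also have "\<dots> = psi m s x z X (pure_tensor s X a)"
    unfolding psi_def using X
  proof (simp, intro sum.cong refl)
    fix g' assume "g' \<in> FA_hom s X"
    then show "sc (pure_tensor m X ?b (extz s m z g')) (act (extz s m z g') m X x) = sc (pure_tensor s X a g') (act (extz s m z g') m X x)"
      using pt_extz[OF sm _ z] by metis
  qed
  finally show ?thesis by simp
qed


lemma psi_add: "psi m s x z X (u + w) = psi m s x z X u + psi m s x z X w"
  unfolding psi_def by (simp add: scale_left_distrib sum.distrib)

lemma psi_sc: "psi m s x z X (Ptens_sc c u) = sc c (psi m s x z X u)"
  unfolding psi_def Ptens_sc_def by (simp add: scale_sum_right)

lemma psi_zero: "psi m s x z X 0 = 0"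
  unfolding psi_def by simp

lemma psi_in: "x \<in> V m \<Longrightarrow> z < X \<or> X = 0 \<Longrightarrow> psi m s x z X v \<in> V X"
  unfolding psi_def using zero_in by (auto intro!: sum_in sc_in act_in extz_hom)

lemma Phi_norm:
  assumes VAN: "\<And>j X b. s \<le> j \<Longrightarrow> j < m \<Longrightarrow> (\<forall>i\<in>insert j {..<s}. b i \<in> Pbar1 X) \<Longrightarrow> Phi m x X (pure_tensor m X b) = 0"
    and X: "0 < X" and z: "z < X" and a: "\<forall>k<s. a k \<in> Pbar1 X"
  shows "Phi m x X (pure_tensor m X (\<lambda>i. if i < s then a i else ind z)) = Phi m x X (pure_tensor m X (\<lambda>i. if i < s then a i else ind 0))"
proof -
  have gen: "Phi m x X (pure_tensor m X (\<lambda>i. if i < s then a i else ind z')) = Phi m x X (pure_tensor m X (\<lambda>k. if k \<in> {s..<m} then ind 0 else (if k < s then a k else ind z')))"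
    if z': "z' < X" for z'
  proof -
    have "Phi m x X (pure_tensor m X (\<lambda>i. if i < s then a i else ind z')) =
      sc (\<Prod>j\<in>{s..<m}. \<Sum>w<X. (if j < s then a j else ind z') w) (Phi m x X (pure_tensor m X (\<lambda>k. if k \<in> {s..<m} then ind 0 else (if k < s then a k else ind z'))))"
      by (rule E2[OF VAN X]) (use a in auto)
    also have "(\<Prod>j\<in>{s..<m}. \<Sum>w<X. (if j < s then a j else ind z') w) = 1"
      using sum_ind[OF z'] by (intro prod.neutral) auto
    finally show ?thesis by simp
  qed
  have "pure_tensor m X (\<lambda>k. if k \<in> {s..<m} then ind 0 else (if k < s then a k else ind z)) =
        pure_tensor m X (\<lambda>k. if k \<in> {s..<m} then ind 0 else (if k < s then a k else ind 0))"
    by (rule pt_cong) auto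
  then show ?thesis using gen[OF z] gen[OF X] by simp
qed

lemma indep:
  assumes VAN: "\<And>j X b. s \<le> j \<Longrightarrow> j < m \<Longrightarrow> (\<forall>i\<in>insert j {..<s}. b i \<in> Pbar1 X) \<Longrightarrow> Phi m x X (pure_tensor m X b) = 0"
    and sm: "s \<le> m" and X: "0 < X" and z: "z < X" and v: "v \<in> Pbar_tensor s X"
  shows "psi m s x z X v = psi m s x 0 X v"
proof -
  have "v \<in> PT.span {pure_tensor s X a | a. \<forall>i<s. a i \<in> Pbar1 X}"
    using v X by (simp add: Pbar_tensor_def)
  then show ?thesis
  proof (induction rule: PT.span_induct_alt)
    case base
    then show ?case by (simp only: psi_zero)
  next
    case (step c y w)
    then obtain a where a: "y = pure_tensor s X a" "\<forall>i<s. a i \<in> Pbar1 X" by auto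
    have "psi m s x z X y = psi m s x 0 X y"
      unfolding a(1) PSI[OF X z sm] PSI[OF X X sm] using Phi_norm[OF VAN X z a(2)] .
    then show ?case using step.IH by (simp only: psi_add psi_sc)
  qed
qed


lemma psi_push:
  assumes f: "f \<in> FA_hom X X'" and X: "0 < X"
  shows "psi m s x z' X' (Ptens_act s f X X' v) = (\<Sum>g'\<in>FA_hom s X. sc (v g') (act (extz s m z' (compose {..<s} f g')) m X' x))"
proof -
  have X': "X' \<noteq> 0" using FA_hom_pos[OF f X] by simp
  have "psi m s x z' X' (Ptens_act s f X X' v) =
     (\<Sum>g''\<in>FA_hom s X'. \<Sum>g'\<in>{g'\<in>FA_hom s X. compose {..<s} f g' = g''}. sc (v g') (act (extz s m z' g'') m X' x))"
    unfolding psi_def Ptens_act_def using X' by (simp add: scale_sum_left)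
  also have "\<dots> = (\<Sum>g''\<in>FA_hom s X'. \<Sum>g'\<in>{g'\<in>FA_hom s X. compose {..<s} f g' = g''}. sc (v g') (act (extz s m z' (compose {..<s} f g')) m X' x))"
    by (intro sum.cong refl) auto
  also have "\<dots> = (\<Sum>g'\<in>FA_hom s X. sc (v g') (act (extz s m z' (compose {..<s} f g')) m X' x))"
    by (rule sum.group) (auto intro: compose_in_FA_hom[OF f, simplified])
  finally show ?thesis .
qed

lemma psi_nat:
  assumes VAN: "\<And>j X b. s \<le> j \<Longrightarrow> j < m \<Longrightarrow> (\<forall>i\<in>insert j {..<s}. b i \<in> Pbar1 X) \<Longrightarrow> Phi m x X (pure_tensor m X b) = 0"
    and sm: "s \<le> m" and x: "x \<in> V m" and f: "f \<in> FA_hom X X'" and v: "v \<in> Pbar_tensor s X"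
  shows "psi m s x 0 X' (Ptens_act s f X X' v) = act f X X' (psi m s x 0 X v)"
proof (cases "X = 0")
  case True
  then have "v = 0" using v by (simp add: Pbar_tensor_def)
  then have "psi m s x 0 X' (Ptens_act s f X X' v) = 0" by (simp only: Ptens_act_zero psi_zero)
  moreover have "act f X X' (psi m s x 0 X v) = 0" using True act_zero[OF f] by (simp add: psi_def)
  ultimately show ?thesis by simp
next
  case False
  then have X: "0 < X" by simp
  have X': "0 < X'" using FA_hom_pos[OF f X] .
  have f0: "f 0 < X'" using f X by (auto simp: FA_hom_def PiE_iff)
  have ext_in: "\<And>g'. g' \<in> FA_hom s X \<Longrightarrow> extz s m 0 g' \<in> FA_hom m X" using extz_hom X by blast
  have "act f X X' (psi m s x 0 X v) = (\<Sum>g'\<in>FA_hom s X. sc (v g') (act f X X' (act (extz s m 0 g') m X x)))"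
    unfolding psi_def using False
    by (simp add: act_sum[OF f] act_sc[OF f] sc_in act_in[OF ext_in x] )
  also have "\<dots> = (\<Sum>g'\<in>FA_hom s X. sc (v g') (act (extz s m (f 0) (compose {..<s} f g')) m X' x))"
  proof (intro sum.cong refl arg_cong2[where f=sc])
    fix g' assume g': "g' \<in> FA_hom s X"
    show "act f X X' (act (extz s m 0 g') m X x) = act (extz s m (f 0) (compose {..<s} f g')) m X' x"
      using act_comp[OF ext_in[OF g'] f x] compose_extz by simp
  qed
  also have "\<dots> = psi m s x (f 0) X' (Ptens_act s f X X' v)"
    by (rule psi_push[OF f X, symmetric])
  also have "\<dots> = psi m s x 0 X' (Ptens_act s f X X' v)"
    by (rule indep[OF VAN sm X' f0 Pbar_tensor_closed[OF f v]])
  finally show ?thesis by simp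
qed


lemma Pbar_tensor_sub: "PT.subspace (Pbar_tensor s X)"
  by (simp add: Pbar_tensor_def)

lemma quotient_from_prefix:
  assumes simple: "FA_simple sc V act"
    and x: "x \<in> V m" and sm: "s \<le> m" and m: "0 < m"
    and good: "\<exists>X b. (\<forall>i<s. b i \<in> Pbar1 X) \<and> Phi m x X (pure_tensor m X b) \<noteq> 0"
    and VAN: "\<And>j X b. s \<le> j \<Longrightarrow> j < m \<Longrightarrow> (\<forall>i\<in>insert j {..<s}. b i \<in> Pbar1 X) \<Longrightarrow> Phi m x X (pure_tensor m X b) = 0"
  shows "FA_quotient_of Ptens_sc (Pbar_tensor s) (Ptens_act s) sc V act"
proof -
  define \<psi> where "\<psi> = (\<lambda>X. psi m s x 0 X)"
  have NT: "FA_nat_trans Ptens_sc (Pbar_tensor s) (Ptens_act s) sc V act \<psi>"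
    unfolding FA_nat_trans_def \<psi>_def
  proof (intro conjI allI ballI impI)
    fix X and v :: "(nat \<Rightarrow> nat) \<Rightarrow> 'k" show "psi m s x 0 X v \<in> V X" by (rule psi_in[OF x]) auto
  next
    fix X and u w :: "(nat \<Rightarrow> nat) \<Rightarrow> 'k" show "psi m s x 0 X (u + w) = psi m s x 0 X u + psi m s x 0 X w" by (rule psi_add)
  next
    fix X c and u :: "(nat \<Rightarrow> nat) \<Rightarrow> 'k" show "psi m s x 0 X (Ptens_sc c u) = sc c (psi m s x 0 X u)" by (rule psi_sc)
  next
    fix X X' f and v :: "(nat \<Rightarrow> nat) \<Rightarrow> 'k" assume f: "f \<in> FA_hom X X'" and v: "v \<in> Pbar_tensor s X"
    show "psi m s x 0 X' (Ptens_act s f X X' v) = act f X X' (psi m s x 0 X v)"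
      by (rule psi_nat[OF _ sm x f v]) (rule VAN; assumption)
  qed
  define W where "W = (\<lambda>X. \<psi> X ` Pbar_tensor s X)"
  have WV: "W X \<subseteq> V X" for X using NT unfolding W_def FA_nat_trans_def by blast
  have Wsub: "subspace (W X)" for X
  proof (rule subspaceI)
    show "0 \<in> W X" unfolding W_def \<psi>_def
      using PT.subspace_0[OF Pbar_tensor_sub] psi_zero by (metis image_eqI)
  next
    fix u w assume "u \<in> W X" "w \<in> W X"
    then obtain u' w' where "u' \<in> Pbar_tensor s X" "w' \<in> Pbar_tensor s X" "u = \<psi> X u'" "w = \<psi> X w'"
      unfolding W_def by blast
    then show "u + w \<in> W X" unfolding W_def \<psi>_def
      using PT.subspace_add[OF Pbar_tensor_sub] psi_add by (metis image_eqI)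
  next
    fix c u assume "u \<in> W X"
    then obtain u' where "u' \<in> Pbar_tensor s X" "u = \<psi> X u'" unfolding W_def by blast
    then show "sc c u \<in> W X" unfolding W_def \<psi>_def
      using PT.subspace_scale[OF Pbar_tensor_sub] psi_sc by (metis image_eqI)
  qed
  have Wact: "act f X X' u \<in> W X'" if fu: "f \<in> FA_hom X X'" "u \<in> W X" for f X X' u
  proof -
    obtain u' where u': "u' \<in> Pbar_tensor s X" "u = \<psi> X u'" using fu(2) unfolding W_def by blast
    have "psi m s x 0 X' (Ptens_act s f X X' u') = act f X X' (psi m s x 0 X u')"
      by (rule psi_nat[OF _ sm x fu(1) u'(1)]) (rule VAN; assumption)
    then show ?thesis unfolding W_def \<psi>_def
      using Pbar_tensor_closed[OF fu(1) u'(1)] u'(2) \<psi>_def by (metis image_eqI)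
  qed
  have subm: "FA_submodule sc V act W"
    unfolding FA_submodule_def using WV Wsub Wact by blast
  obtain X b where b: "\<forall>i<s. b i \<in> Pbar1 X" and nz: "Phi m x X (pure_tensor m X b) \<noteq> 0"
    using good by blast
  have X: "0 < X"
  proof (rule ccontr)
    assume "\<not> 0 < X"
    then have "FA_hom m X = {}" using FA_hom_pos m by fastforce
    then show False using nz by (simp add: Phi_def)
  qed
  have "Phi m x X (pure_tensor m X b) = sc (\<Prod>j\<in>{s..<m}. \<Sum>w<X. b j w) (Phi m x X (pure_tensor m X (\<lambda>k. if k \<in> {s..<m} then ind 0 else b k)))"
    by (rule E2[OF VAN X]) (use b in auto)
  then have nz2: "Phi m x X (pure_tensor m X (\<lambda>k. if k \<in> {s..<m} then ind 0 else b k)) \<noteq> 0"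
    using nz by auto
  have "pure_tensor m X (\<lambda>k. if k \<in> {s..<m} then ind 0 else b k) = pure_tensor m X (\<lambda>i. if i < s then b i else ind 0)"
    by (rule pt_cong) auto
  then have "\<psi> X (pure_tensor s X b) \<noteq> 0" using nz2 PSI[OF X X sm] by (simp add: \<psi>_def)
  moreover have "pure_tensor s X b \<in> Pbar_tensor s X"
    using X b by (auto simp: Pbar_tensor_def intro!: PT.span_base)
  ultimately have "W X \<noteq> {0}" unfolding W_def by blast
  then have "W = V" using simple subm unfolding FA_simple_def by blast
  then show ?thesis unfolding FA_quotient_of_def using NT W_def by metis
qed


lemma Phi_id:
  assumes x: "x \<in> V m"
  shows "Phi m x m (pure_tensor m m (\<lambda>i. ind i)) = x"
proof -
  let ?id = "restrict id {..<m}"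
  have idh: "?id \<in> FA_hom m m" by (auto simp: FA_hom_def)
  have pt: "pure_tensor m m (\<lambda>i. ind i) g = (if g = ?id then 1 else (0::'k))" if "g \<in> FA_hom m m" for g
  proof (cases "g = ?id")
    case True
    then show ?thesis by (simp add: pure_tensor_def idh ind_def)
  next
    case False
    have "\<exists>i<m. g i \<noteq> i"
    proof (rule ccontr)
      assume "\<not> (\<exists>i<m. g i \<noteq> i)"
      then have "g = ?id" using that by (auto simp: FA_hom_def PiE_iff extensional_def fun_eq_iff)
      then show False using False by simp
    qed
    then obtain i where i: "i < m" "g i \<noteq> i" by blast
    then have "(\<Prod>i<m. ind i (g i)) = (0::'k)" by (intro prod_zero) (auto simp: ind_def intro!: bexI[of _ i])
    then show ?thesis using False that by (simp add: pure_tensor_def)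
  qed
  have "Phi m x m (pure_tensor m m (\<lambda>i. ind i)) = (\<Sum>g\<in>FA_hom m m. if g = ?id then act g m m x else 0)"
    unfolding Phi_def by (intro sum.cong refl) (simp add: pt)
  also have "\<dots> = act ?id m m x" using idh by simp
  also have "\<dots> = x" using act_id[OF x] by simp
  finally show ?thesis .
qed

lemma Phi_perm:
  assumes p: "p \<in> FA_hom m m" and pp: "\<And>i. i < m \<Longrightarrow> p (p i) = i" and x: "x \<in> V m"
  shows "Phi m (act p m m x) X (pure_tensor m X b) = Phi m x X (pure_tensor m X (\<lambda>i. b (p i)))"
proof -
  have cc: "compose {..<m} (compose {..<m} g p) p = g" if "g \<in> FA_hom m X" for g
    using that pp p by (auto simp: compose_def fun_eq_iff FA_hom_def PiE_iff extensional_def)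
  have ch: "compose {..<m} g p \<in> FA_hom m X" if "g \<in> FA_hom m X" for g
    using compose_in_FA_hom[OF that p] by simp
  have pimg: "p ` {..<m} = {..<m}"
  proof
    show "p ` {..<m} \<subseteq> {..<m}" using p by (auto simp: FA_hom_def PiE_iff)
    show "{..<m} \<subseteq> p ` {..<m}" using pp p by (force simp: FA_hom_def PiE_iff)
  qed
  have pinj: "inj_on p {..<m}" by (metis inj_on_inverseI lessThan_iff pp)
  have ptp: "pure_tensor m X (\<lambda>i. b (p i)) (compose {..<m} g p) = pure_tensor m X b g" if "g \<in> FA_hom m X" for g
  proof -
    have "(\<Prod>i<m. b (p i) (compose {..<m} g p i)) = (\<Prod>i<m. b (p i) (g (p i)))"
      by (intro prod.cong) (auto simp: compose_def)
    also have "\<dots> = (\<Prod>i\<in>p ` {..<m}. b i (g i))" using prod.reindex[OF pinj, of "\<lambda>i. b i (g i)"] by simp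
    also have "\<dots> = (\<Prod>i<m. b i (g i))" using pimg by simp
    finally show ?thesis using that ch[OF that] by (simp add: pure_tensor_def)
  qed
  have "Phi m (act p m m x) X (pure_tensor m X b) = (\<Sum>g\<in>FA_hom m X. sc (pure_tensor m X b g) (act (compose {..<m} g p) m X x))"
    unfolding Phi_def by (intro sum.cong refl) (simp add: act_comp[OF p _ x])
  also have "\<dots> = Phi m x X (pure_tensor m X (\<lambda>i. b (p i)))"
    unfolding Phi_def
    by (rule sum.reindex_bij_witness[where i="\<lambda>g. compose {..<m} g p" and j="\<lambda>g. compose {..<m} g p"])
       (auto simp: cc ch ptp)
  finally show ?thesis .
qed


theorem part1:
  assumes simple: "FA_simple sc V act" and V0: "V 0 = {0}"
  shows "\<exists>n. FA_quotient_of Ptens_sc (Pbar_tensor n) (Ptens_act n) sc V act"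
proof -
  from simple obtain m where "V m \<noteq> {0}" unfolding FA_simple_def by blast
  then obtain x0 where x0: "x0 \<in> V m" "x0 \<noteq> 0" using zero_in by blast
  have m: "0 < m" using x0 V0 by (cases m) auto
  define goodp where "goodp x s \<longleftrightarrow> (\<exists>X b. (\<forall>i<s. b i \<in> Pbar1 X) \<and> Phi m x X (pure_tensor m X b) \<noteq> 0)" for x s
  define GS where "GS = {s. s \<le> m \<and> (\<exists>x\<in>V m. goodp x s)}"
  have "goodp x0 0" unfolding goodp_def using Phi_id[OF x0(1)] x0(2) by (intro exI[of _ m] exI[of _ ind]) auto
  then have G0: "0 \<in> GS" using x0 by (auto simp: GS_def)
  have fG: "finite GS" unfolding GS_def by (rule finite_subset[of _ "{..m}"]) auto
  define s where "s = Max GS"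
  have "s \<in> GS" unfolding s_def using fG G0 by (intro Max_in) auto
  then obtain x where x: "x \<in> V m" "goodp x s" and sm: "s \<le> m" unfolding GS_def by blast
  have VAN: "Phi m x X (pure_tensor m X b) = 0"
    if j: "s \<le> j" "j < m" and b: "\<forall>i\<in>insert j {..<s}. b i \<in> Pbar1 X" for j X b
  proof (rule ccontr)
    assume nz: "Phi m x X (pure_tensor m X b) \<noteq> 0"
    define \<tau> where "\<tau> = restrict (\<lambda>i. if i = s then j else if i = j then s else i) {..<m}"
    have \<tau>h: "\<tau> \<in> FA_hom m m" using j by (auto simp: \<tau>_def FA_hom_def)
    have \<tau>\<tau>: "\<And>i. i < m \<Longrightarrow> \<tau> (\<tau> i) = i" using j by (auto simp: \<tau>_def)
    define b' where "b' = (\<lambda>i. b (\<tau> i))"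
    have "Phi m (act \<tau> m m x) X (pure_tensor m X b') = Phi m x X (pure_tensor m X (\<lambda>i. b' (\<tau> i)))"
      by (rule Phi_perm[OF \<tau>h \<tau>\<tau> x(1)])
    also have "pure_tensor m X (\<lambda>i. b' (\<tau> i)) = pure_tensor m X b"
      by (rule pt_cong) (simp add: b'_def \<tau>\<tau>)
    finally have nz': "Phi m (act \<tau> m m x) X (pure_tensor m X b') \<noteq> 0" using nz by simp
    have "\<forall>i<Suc s. b' i \<in> Pbar1 X"
    proof (intro allI impI)
      fix i assume "i < Suc s"
      then show "b' i \<in> Pbar1 X" using b j by (cases "i = s") (auto simp: b'_def \<tau>_def)
    qed
    then have "goodp (act \<tau> m m x) (Suc s)" unfolding goodp_def using nz' by blast
    moreover have "act \<tau> m m x \<in> V m" by (rule act_in[OF \<tau>h x(1)])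
    ultimately have "Suc s \<in> GS" using j unfolding GS_def by auto
    then have "Suc s \<le> s" unfolding s_def using fG by (intro Max_ge) auto
    then show False by simp
  qed
  have "FA_quotient_of Ptens_sc (Pbar_tensor s) (Ptens_act s) sc V act"
    by (rule quotient_from_prefix[OF simple x(1) sm m]) (use x(2) goodp_def VAN in auto)
  then show ?thesis by blast
qed

end

context FAmod
begin

lemma FA_hom_00: "f \<in> FA_hom 0 0 \<Longrightarrow> f = restrict id {..<0}"
  by (auto simp: FA_hom_def PiE_def extensional_def fun_eq_iff)

theorem K0_case:
  assumes simple: "FA_simple sc V act" and V0: "V 0 \<noteq> {0}"
  shows "FA_iso sc V act ((*) :: 'k \<Rightarrow> 'k \<Rightarrow> 'k) K0_val K0_act"
proof -
  have ssub: "\<And>W. FA_submodule sc V act W \<Longrightarrow> (\<forall>m. W m = {0}) \<or> W = V"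
    using simple unfolding FA_simple_def by blast
  define W where "W = (\<lambda>X::nat. if X = 0 then {0} else V X)"
  have "FA_submodule sc V act W"
    unfolding FA_submodule_def
  proof (intro conjI allI impI ballI)
    fix X show "W X \<subseteq> V X" using zero_in by (auto simp: W_def)
    show "subspace (W X)" using sub by (auto simp: W_def)
  next
    fix X X' f u assume f: "f \<in> FA_hom X X'" and u: "u \<in> W X"
    show "act f X X' u \<in> W X'"
    proof (cases "X = 0")
      case True
      then have "u = 0" using u by (simp add: W_def)
      then show ?thesis using act_zero[OF f] zero_in by (auto simp: W_def)
    next
      case False
      then have "X' \<noteq> 0" using FA_hom_pos[OF f] by auto
      then show ?thesis using False u act_in[OF f] by (auto simp: W_def)
    qed
  qed
  then have "(\<forall>m. W m = {0}) \<or> W = V" by (rule ssub)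
  moreover have "W \<noteq> V" using V0 by (auto simp: W_def fun_eq_iff)
  ultimately have Vpos: "\<And>X. X \<noteq> 0 \<Longrightarrow> V X = {0}" by (metis W_def)
  obtain e where e: "e \<in> V 0" "e \<noteq> 0" using V0 zero_in by blast
  define U where "U = (\<lambda>X::nat. if X = 0 then range (\<lambda>c. sc c e) else {0})"
  have "FA_submodule sc V act U"
    unfolding FA_submodule_def
  proof (intro conjI allI impI ballI)
    fix X show "U X \<subseteq> V X" using zero_in sc_in[OF e(1)] by (auto simp: U_def)
    show "subspace (U X)"
    proof (cases "X = 0")
      case True
      show ?thesis unfolding U_def using True
      proof (simp, intro subspaceI)
        show "0 \<in> range (\<lambda>c. sc c e)" by (rule image_eqI[of _ _ 0]) auto
      next
        fix u w assume "u \<in> range (\<lambda>c. sc c e)" "w \<in> range (\<lambda>c. sc c e)"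
        then show "u + w \<in> range (\<lambda>c. sc c e)" by (auto simp: scale_left_distrib[symmetric])
      next
        fix c u assume "u \<in> range (\<lambda>c. sc c e)"
        then show "sc c u \<in> range (\<lambda>c. sc c e)" by auto
      qed
    qed (simp add: U_def)
  next
    fix X X' f u assume f: "f \<in> FA_hom X X'" and u: "u \<in> U X"
    show "act f X X' u \<in> U X'"
    proof (cases "X = 0")
      case True
      show ?thesis
      proof (cases "X' = 0")
        case True': True
        have uV: "u \<in> V 0" using u sc_in[OF e(1)] True by (auto simp: U_def)
        have "act f X X' u = u" using FA_hom_00[of f] f True True' act_id[OF uV] by simp
        then show ?thesis using u True True' by simp
      next
        case False
        have "act f X X' u \<in> V X'" using act_in[OF f] u sc_in[OF e(1)] True by (auto simp: U_def)
        then show ?thesis using Vpos[OF False] False by (simp add: U_def)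
      qed
    next
      case False
      then have "u = 0" using u by (simp add: U_def)
      then show ?thesis using act_zero[OF f] FA_hom_pos[OF f] False by (auto simp: U_def)
    qed
  qed
  then have "(\<forall>m. U m = {0}) \<or> U = V" by (rule ssub)
  moreover have "U 0 \<noteq> {0}" using e by (auto simp: U_def intro!: image_eqI[of _ _ 1])
  ultimately have "U = V" by blast
  then have V0e: "V 0 = range (\<lambda>c. sc c e)" by (metis U_def)
  have coord: "(THE c. sc d e = sc c e) = d" for d
    using e(2) by (intro the_equality) auto
  define \<phi> where "\<phi> = (\<lambda>(X::nat) u. if X = 0 then (THE c. u = sc c e) else (0::'k))"
  have \<phi>0: "\<phi> 0 (sc d e) = d" for d using coord by (simp add: \<phi>_def)
  have NT: "FA_nat_trans sc V act (*) K0_val K0_act \<phi>"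
    unfolding FA_nat_trans_def
  proof (intro conjI allI ballI impI)
    fix X u show "\<phi> X u \<in> K0_val X" by (simp add: \<phi>_def K0_val_def)
  next
    fix X u w assume "u \<in> V X" "w \<in> V X"
    then show "\<phi> X (u + w) = \<phi> X u + \<phi> X w"
      using V0e \<phi>0 by (cases "X = 0") (auto simp: \<phi>_def scale_left_distrib[symmetric])
  next
    fix X c u assume "u \<in> V X"
    then show "\<phi> X (sc c u) = c * \<phi> X u"
      using V0e \<phi>0 by (cases "X = 0") (auto simp: \<phi>_def)
  next
    fix X X' f u assume f: "f \<in> FA_hom X X'" and u: "u \<in> V X"
    show "\<phi> X' (act f X X' u) = K0_act f X X' (\<phi> X u)"
    proof (cases "X = 0 \<and> X' = 0")
      case True
      then have "act f X X' u = u" using FA_hom_00[of f] f act_id[of u 0] u by simp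
      then show ?thesis using True by (simp add: K0_act_def)
    next
      case False
      then have "X' \<noteq> 0" using FA_hom_pos[OF f] by auto
      then show ?thesis using False by (auto simp: K0_act_def \<phi>_def)
    qed
  qed
  have bij: "bij_betw (\<phi> X) (V X) (K0_val X)" for X
  proof (cases "X = 0")
    case True
    show ?thesis unfolding True V0e K0_val_def
      by (rule bij_betw_byWitness[where f'="\<lambda>c. sc c e"]) (auto simp: \<phi>0)
  next
    case False
    then show ?thesis using Vpos[OF False] by (simp add: K0_val_def \<phi>_def bij_betw_def)
  qed
  show ?thesis unfolding FA_iso_def using NT bij by blast
qed

end

theorem mainTheorem5:
  fixes sc :: "'k::field \<Rightarrow> 'v::ab_group_add \<Rightarrow> 'v"
    and V :: "nat \<Rightarrow> 'v set"
    and act :: "(nat \<Rightarrow> nat) \<Rightarrow> nat \<Rightarrow> nat \<Rightarrow> 'v \<Rightarrow> 'v"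
  assumes "FA_simple sc V act"
  shows "(FA_iso sc V act ((*) :: 'k \<Rightarrow> 'k \<Rightarrow> 'k) K0_val K0_act
          \<or> (\<exists>n. FA_quotient_of (Ptens_sc :: 'k \<Rightarrow> _) (Pbar_tensor n) (Ptens_act n) sc V act))
       \<and> (\<forall>t. FA_composition_factor sc V act (Ptens_sc :: 'k \<Rightarrow> _) (Pbar_tensor t) (Ptens_act t)
              \<longrightarrow> V (Suc t) \<noteq> {0})"
proof
  interpret FAmod sc V act using assms by (simp add: FA_simple_def FAmod_def)
  show "FA_iso sc V act ((*) :: 'k \<Rightarrow> 'k \<Rightarrow> 'k) K0_val K0_act
          \<or> (\<exists>n. FA_quotient_of (Ptens_sc :: 'k \<Rightarrow> _) (Pbar_tensor n) (Ptens_act n) sc V act)"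
  proof (cases "V 0 = {0}")
    case True
    then show ?thesis using part1[OF assms] by blast
  next
    case False
    then show ?thesis using K0_case[OF assms] by blast
  qed
  show "\<forall>t. FA_composition_factor sc V act (Ptens_sc :: 'k \<Rightarrow> _) (Pbar_tensor t) (Ptens_act t)
              \<longrightarrow> V (Suc t) \<noteq> {0}"
    using part2[OF assms] by blast
qed

end
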